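(* For arbitrary positive integers $m$ and $n$, there exist a finite alphabet $A$, a letter $a\in A$, and languages $K,L\subseteq A^*$ whose syntactic monoids $M$ and $N$ satisfy $|M|=m$ and $|N|=n$, such that, taking $\varphi:A^*\to M$, $u\mapsto u{\sim}_K$ and $\psi:A^*\to N$, $u\mapsto u{\sim}_L$ to be the syntactic homomorphisms, the mapping $\mu_a:A^*\to M\Diamond N$ is surjective.
   Context: The syntactic congruence of $R\subseteq A^*$ is $u\sim_R v$ iff for all $p,q\in A^*$, $puq\in R\Leftrightarrow pvq\in R$; the syntactic monoid is $A^*/{\sim_R}$. For finite monoids $M,N$, the Schützenberger product $M\Diamond N$ is the set of $2\times2$ matrices $P$ with $P_{1,1}\in M$, $P_{2,2}\in N$, $P_{2,1}=\emptyset$, $P_{1,2}\subseteq M\times N$, with multiplication $(PQ)_{1,1}=P_{1,1}Q_{1,1}$, $(PQ)_{2,2}=P_{2,2}Q_{2,2}$, $(PQ)_{1,2}=\{(P_{1,1}x,y)\mid (x,y)\in Q_{1,2}\}\cup\{(z,tQ_{2,2})\mid (z,t)\in P_{1,2}\}$. Given homomorphisms $\varphi:A^*\to M$, $\psi:A^*\to N$ and $a\in A$, the homomorphism $\mu_a:A^*\to M\Diamond N$ is defined by $(\mu_a(u))_{1,1}=\varphi(u)$, $(\mu_a(u))_{2,2}=\psi(u)$, $(\mu_a(u))_{1,2}=\{(\varphi(u'),\psi(u''))\mid u=u'au'',\ u',u''\in A^*\}$. *)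

theory Defs
  imports Main
begin

definition synt_equiv :: "'a set \<Rightarrow> 'a list set \<Rightarrow> 'a list \<Rightarrow> 'a list \<Rightarrow> bool" where
  "synt_equiv A R u v \<longleftrightarrow>
     (\<forall>p\<in>lists A. \<forall>q\<in>lists A. p @ u @ q \<in> R \<longleftrightarrow> p @ v @ q \<in> R)"

definition synt_hom :: "'a set \<Rightarrow> 'a list set \<Rightarrow> 'a list \<Rightarrow> 'a list set" where
  "synt_hom A R u = {v \<in> lists A. synt_equiv A R u v}"

definition synt_monoid :: "'a set \<Rightarrow> 'a list set \<Rightarrow> 'a list set set" where
  "synt_monoid A R = synt_hom A R ` lists A"

text \<open>Schuetzenberger product of M and N: triples (P11, P12, P22) standing for the
  matrix with P21 empty.\<close>
definition schutz_carrier :: "'m set \<Rightarrow> 'n set \<Rightarrow> ('m \<times> ('m \<times> 'n) set \<times> 'n) set" where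
  "schutz_carrier M N = {(x, S, y). x \<in> M \<and> y \<in> N \<and> S \<subseteq> M \<times> N}"

definition schutz_mult ::
  "('m \<Rightarrow> 'm \<Rightarrow> 'm) \<Rightarrow> ('n \<Rightarrow> 'n \<Rightarrow> 'n) \<Rightarrow>
   ('m \<times> ('m \<times> 'n) set \<times> 'n) \<Rightarrow> ('m \<times> ('m \<times> 'n) set \<times> 'n) \<Rightarrow> ('m \<times> ('m \<times> 'n) set \<times> 'n)" where
  "schutz_mult mM mN P Q = (case P of (p11, p12, p22) \<Rightarrow> case Q of (q11, q12, q22) \<Rightarrow>
     (mM p11 q11,
      {(mM p11 x, y) | x y. (x, y) \<in> q12} \<union> {(z, mN t q22) | z t. (z, t) \<in> p12},
      mN p22 q22))"

definition mu :: "('a list \<Rightarrow> 'm) \<Rightarrow> ('a list \<Rightarrow> 'n) \<Rightarrow> 'a \<Rightarrow> 'a list \<Rightarrow> ('m \<times> ('m \<times> 'n) set \<times> 'n)" where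
  "mu \<phi> \<psi> a u = (\<phi> u, {(\<phi> u', \<psi> u'') | u' u''. u = u' @ a # u''}, \<psi> u)"

end

theory Submission
  imports Defs
begin

lemma count_rep: "count_list (replicate k x) y = (if x = y then k else 0)"
  by (induction k) auto
lemma modlem: fixes a r m :: nat assumes "a < m" "r < m" "(a + (m - r)) mod m = 0" shows "a = r"
proof (cases "r \<le> a")
  case True
  hence "a + (m - r) = (a - r) + m" using assms by simp
  hence "(a - r) mod m = 0" using assms(3) by simp
  thus ?thesis using True assms(1) by simp
next
  case False
  hence "a + (m - r) < m" "0 < a + (m - r)" using assms by auto
  thus ?thesis using assms(3) by simp
qed

definition cls :: "'a set \<Rightarrow> 'a \<Rightarrow> nat \<Rightarrow> nat \<Rightarrow> 'a list set" where
  "cls A b m r = {v \<in> lists A. count_list v b mod m = r}"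

lemma synt_hom_cnt:
  assumes b: "b \<in> A" and m: "0 < m" and K: "K = {w\<in>lists A. count_list w b mod m = 0}"
    and u: "u \<in> lists A"
  shows "synt_hom A K u = cls A b m (count_list u b mod m)"
proof -
  have "synt_equiv A K u v \<longleftrightarrow> count_list v b mod m = count_list u b mod m" if v: "v \<in> lists A" for v
  proof
    assume "synt_equiv A K u v"
    hence eq: "\<And>p q. p \<in> lists A \<Longrightarrow> q \<in> lists A \<Longrightarrow> p @ u @ q \<in> K \<longleftrightarrow> p @ v @ q \<in> K"
      unfolding synt_equiv_def by blast
    define q where "q = replicate (m - count_list u b mod m) b"
    have q: "q \<in> lists A" using b by (auto simp: q_def)
    have cq: "count_list q b = m - count_list u b mod m" by (simp add: q_def count_rep)
    have mm: "(count_list u b + (m - count_list u b mod m)) mod m = 0"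
    proof -
      have "(count_list u b + (m - count_list u b mod m)) mod m = (count_list u b mod m + (m - count_list u b mod m)) mod m"
        by (simp add: mod_add_left_eq)
      also have "\<dots> = m mod m" using m by simp
      finally show ?thesis by simp
    qed
    have "[] @ u @ q \<in> K" using u q m mm by (simp add: K count_list_append cq)
    hence "[] @ v @ q \<in> K" using eq[of "[]" q] q by simp
    hence "(count_list v b + (m - count_list u b mod m)) mod m = 0" by (simp add: K count_list_append cq)
    hence e3: "(count_list v b mod m + (m - count_list u b mod m)) mod m = 0" by (simp add: mod_add_left_eq)
    have e1: "count_list v b mod m < m" and e2: "count_list u b mod m < m" using m by auto
    show "count_list v b mod m = count_list u b mod m"
      by (rule modlem[OF e1 e2 e3])
  next
    assume h: "count_list v b mod m = count_list u b mod m"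
    show "synt_equiv A K u v" unfolding synt_equiv_def
    proof (intro ballI)
      fix p q assume "p \<in> lists A" "q \<in> lists A"
      have "(count_list p b + count_list u b + count_list q b) mod m = (count_list p b + count_list v b + count_list q b) mod m"
        using h by (metis mod_add_cong)
      thus "p @ u @ q \<in> K \<longleftrightarrow> p @ v @ q \<in> K" using u v \<open>p \<in> lists A\<close> \<open>q \<in> lists A\<close>
        by (simp add: K count_list_append add.assoc)
    qed
  qed
  thus ?thesis unfolding synt_hom_def cls_def by auto
qed

lemma synt_monoid_cnt:
  assumes b: "b \<in> A" and m: "0 < m" and K: "K = {w\<in>lists A. count_list w b mod m = 0}"
  shows "synt_monoid A K = cls A b m ` {..<m}" and "card (synt_monoid A K) = m"
proof -
  show e: "synt_monoid A K = cls A b m ` {..<m}"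
  proof
    show "synt_monoid A K \<subseteq> cls A b m ` {..<m}"
      unfolding synt_monoid_def using synt_hom_cnt[OF b m K] m by auto
    show "cls A b m ` {..<m} \<subseteq> synt_monoid A K"
    proof
      fix X assume "X \<in> cls A b m ` {..<m}"
      then obtain r where r: "r < m" "X = cls A b m r" by auto
      have "replicate r b \<in> lists A" using b by auto
      moreover have "synt_hom A K (replicate r b) = X"
        using synt_hom_cnt[OF b m K \<open>replicate r b \<in> lists A\<close>] r by (simp add: count_rep)
      ultimately show "X \<in> synt_monoid A K" unfolding synt_monoid_def by blast
    qed
  qed
  have "inj_on (cls A b m) {..<m}"
  proof
    fix r s assume "r \<in> {..<m}" "s \<in> {..<m}" "cls A b m r = cls A b m s"
    moreover have "replicate r b \<in> cls A b m r" using b \<open>r \<in> {..<m}\<close> by (auto simp: cls_def count_rep)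
    ultimately show "r = s" by (auto simp: cls_def count_rep)
  qed
  thus "card (synt_monoid A K) = m" using e by (simp add: card_image)
qed

definition R :: "nat \<Rightarrow> nat \<Rightarrow> nat list \<Rightarrow> (nat \<times> nat) set" where
  "R m n w = {(count_list u' 1 mod m, count_list u'' 2 mod n) | u' u''. w = u' @ 0 # u''}"

lemma split_append: "xs @ ys = u' @ a # u'' \<longleftrightarrow>
   (\<exists>z. xs = u' @ a # z \<and> u'' = z @ ys) \<or> (\<exists>z. u' = xs @ z \<and> ys = z @ a # u'')"
  by (auto simp: append_eq_append_conv2 Cons_eq_append_conv append_eq_Cons_conv)

lemma R_append: "R m n (xs @ ys) = (\<lambda>(p,q). (p, (q + count_list ys 2) mod n)) ` R m n xs
   \<union> (\<lambda>(p,q). ((count_list xs 1 + p) mod m, q)) ` R m n ys"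
proof (rule set_eqI, rule iffI)
  fix e assume "e \<in> R m n (xs @ ys)"
  then obtain u' u'' where e: "e = (count_list u' 1 mod m, count_list u'' 2 mod n)" "xs @ ys = u' @ 0 # u''"
    unfolding R_def by blast
  from e(2)[unfolded split_append] show "e \<in> (\<lambda>(p,q). (p, (q + count_list ys 2) mod n)) ` R m n xs
   \<union> (\<lambda>(p,q). ((count_list xs 1 + p) mod m, q)) ` R m n ys"
  proof (elim disjE exE conjE)
    fix z assume z: "xs = u' @ 0 # z" "u'' = z @ ys"
    have "(count_list u' 1 mod m, count_list z 2 mod n) \<in> R m n xs" unfolding R_def using z by blast
    moreover have "e = (\<lambda>(p,q). (p, (q + count_list ys 2) mod n)) (count_list u' 1 mod m, count_list z 2 mod n)"
      using e z by (simp add: count_list_append mod_add_left_eq)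
    ultimately show ?thesis by blast
  next
    fix z assume z: "u' = xs @ z" "ys = z @ 0 # u''"
    have "(count_list z 1 mod m, count_list u'' 2 mod n) \<in> R m n ys" unfolding R_def using z by blast
    moreover have "e = (\<lambda>(p,q). ((count_list xs 1 + p) mod m, q)) (count_list z 1 mod m, count_list u'' 2 mod n)"
      using e z by (simp add: count_list_append mod_add_right_eq)
    ultimately show ?thesis by blast
  qed
next
  fix e assume "e \<in> (\<lambda>(p,q). (p, (q + count_list ys 2) mod n)) ` R m n xs
   \<union> (\<lambda>(p,q). ((count_list xs 1 + p) mod m, q)) ` R m n ys"
  thus "e \<in> R m n (xs @ ys)"
  proof (elim UnE imageE)
    fix pq assume pq: "pq \<in> R m n xs" "e = (\<lambda>(p,q). (p, (q + count_list ys 2) mod n)) pq"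
    then obtain u' z where u: "pq = (count_list u' 1 mod m, count_list z 2 mod n)" "xs = u' @ 0 # z"
      unfolding R_def by blast
    have "e = (count_list u' 1 mod m, count_list (z @ ys) 2 mod n)"
      using pq u by (simp add: count_list_append mod_add_left_eq)
    moreover have "xs @ ys = u' @ 0 # (z @ ys)" using u by simp
    ultimately show ?thesis unfolding R_def by blast
  next
    fix pq assume pq: "pq \<in> R m n ys" "e = (\<lambda>(p,q). ((count_list xs 1 + p) mod m, q)) pq"
    then obtain z u'' where u: "pq = (count_list z 1 mod m, count_list u'' 2 mod n)" "ys = z @ 0 # u''"
      unfolding R_def by blast
    have "e = (count_list (xs @ z) 1 mod m, count_list u'' 2 mod n)"
      using pq u by (simp add: count_list_append mod_add_right_eq)
    moreover have "xs @ ys = (xs @ z) @ 0 # u''" using u by simp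
    ultimately show ?thesis unfolding R_def by blast
  qed
qed

lemma R_noa: "0 \<notin> set w \<Longrightarrow> R m n w = {}"
  unfolding R_def by auto

lemma R_single: "R m n [0] = {(0,0)}"
  unfolding R_def by (auto simp: Cons_eq_append_conv)


lemma main:
  assumes "finite T" "0 < m" "0 < n"
  shows "T \<subseteq> {..<m} \<times> {..<n} \<Longrightarrow> \<exists>w\<in>lists {0,1,2}. count_list w 1 mod m = x mod m \<and>
           count_list w 2 mod n = y mod n \<and> R m n w = T"
  using assms(1)
proof (induction T arbitrary: x y rule: finite_induct)
  case empty
  define w :: "nat list" where "w = replicate x 1 @ replicate y 2"
  have "0 \<notin> set w" by (auto simp: w_def)
  hence "R m n w = {}" by (rule R_noa)
  moreover have "w \<in> lists {0,1,2}" by (auto simp: w_def)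
  ultimately show ?case by (intro bexI[of _ w]) (auto simp: w_def count_list_append count_rep)
next
  case (insert pr T)
  obtain x0 y0 where pr: "pr = (x0, y0)" by force
  have x0: "x0 < m" and y0: "y0 < n" using insert.prems pr by auto
  obtain w where w: "w \<in> lists {0,1,2}" "count_list w 1 mod m = 0 mod m"
     "count_list w 2 mod n = y mod n" "R m n w = T"
  proof -
    have "T \<subseteq> {..<m} \<times> {..<n}" using insert.prems by auto
    from insert.IH[OF this, of 0 y] show ?thesis using that by blast
  qed
  define s where "s = n - y0"
  define r where "r = m - x0 + x"
  define v1 :: "nat list" where "v1 = replicate s 2 @ replicate x0 1"
  define v2 :: "nat list" where "v2 = replicate y0 2 @ replicate r 1"
  define W where "W = (w @ v1) @ ([0] @ v2)"
  have Wl: "W \<in> lists {0,1,2}" using w by (auto simp: W_def v1_def v2_def)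
  have Rv1: "R m n v1 = {}" by (rule R_noa) (auto simp: v1_def)
  have Rv2: "R m n v2 = {}" by (rule R_noa) (auto simp: v2_def)
  have f2v1: "count_list v1 2 = s" by (simp add: v1_def count_list_append count_rep)
  have f1v1: "count_list v1 1 = x0" by (simp add: v1_def count_list_append count_rep)
  have f2v2: "count_list v2 2 = y0" by (simp add: v2_def count_list_append count_rep)
  have f1v2: "count_list v2 1 = r" by (simp add: v2_def count_list_append count_rep)
  have R0v2: "R m n ([0] @ v2) = {(0, y0)}"
    unfolding R_append R_single Rv2 using y0 by (simp add: f2v2)
  have Rwv1: "R m n (w @ v1) = (\<lambda>(p,q). (p, (q + s) mod n)) ` T"
    unfolding R_append Rv1 w(4) f2v1 by simp
  have sh: "(\<lambda>(p,q). (p, ((q + s) mod n + y0) mod n)) ` T = T"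
  proof -
    have "((q + s) mod n + y0) mod n = q" if "(p,q) \<in> T" for p q
    proof -
      have "q < n" using that insert.prems by auto
      have "((q + s) mod n + y0) mod n = (q + (s + y0)) mod n" by (simp add: mod_add_left_eq add.assoc)
      also have "\<dots> = (q + n) mod n" using y0 by (simp add: s_def)
      finally show ?thesis using \<open>q < n\<close> by simp
    qed
    thus ?thesis by (force simp: image_def)
  qed
  have f1w: "(count_list w 1 + x0) mod m = x0"
    using w(2) x0 by (simp add: mod_add_left_eq[symmetric])
  have RW: "R m n W = insert pr T"
    unfolding W_def R_append[of m n "w @ v1"] R0v2 Rwv1 image_image
    using sh f1w pr f1v1 f2v2 by (simp add: count_list_append f1v1 f2v2 case_prod_beta' insert_commute)
  have c1: "count_list W 1 mod m = x mod m"
  proof -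
    have "count_list W 1 mod m = (count_list w 1 + x0 + (m - x0 + x)) mod m"
      using f1v1 f1v2 by (simp add: W_def count_list_append r_def add.assoc)
    also have "\<dots> = (count_list w 1 mod m + x + m) mod m" using x0
      by (simp add: mod_add_left_eq mod_add_right_eq algebra_simps)
    also have "\<dots> = x mod m" using w(2) by (simp add: mod_add_left_eq[symmetric])
    finally show ?thesis .
  qed
  have c2: "count_list W 2 mod n = y mod n"
  proof -
    have "count_list W 2 mod n = (count_list w 2 + (s + y0)) mod n"
      using f2v1 f2v2 by (simp add: W_def count_list_append add.assoc)
    also have "\<dots> = (count_list w 2 + n) mod n" using y0 by (simp add: s_def)
    also have "\<dots> = y mod n" using w(3) by simp
    finally show ?thesis .
  qed
  show ?case
  proof (rule bexI[of _ W])
    show "count_list W 1 mod m = x mod m \<and> count_list W 2 mod n = y mod n \<and> R m n W = insert pr T"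
      using c1 c2 RW by blast
  qed (rule Wl)
qed

lemma mid:
  fixes A :: "nat set" and K L
  assumes A_def: "A = {0,1,2}" and m: "0 < m" and n: "0 < n"
    and K: "K = {w\<in>lists A. count_list w 1 mod m = 0}"
    and L: "L = {w\<in>lists A. count_list w 2 mod n = 0}"
    and u: "u \<in> lists A"
  shows "{(synt_hom A K u', synt_hom A L u'') | u' u''. u = u' @ 0 # u''}
     = (\<lambda>(p,q). (cls A 1 m p, cls A 2 n q)) ` R m n u"
proof -
  have h1: "synt_hom A K v = cls A 1 m (count_list v 1 mod m)" if "v \<in> lists A" for v
    using synt_hom_cnt[OF _ m K that] by (simp add: A_def)
  have h2: "synt_hom A L v = cls A 2 n (count_list v 2 mod n)" if "v \<in> lists A" for v
    using synt_hom_cnt[OF _ n L that] by (simp add: A_def)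
  show ?thesis
  proof (rule set_eqI, rule iffI)
    fix z assume "z \<in> {(synt_hom A K u', synt_hom A L u'') | u' u''. u = u' @ 0 # u''}"
    then obtain u' u'' where z: "z = (synt_hom A K u', synt_hom A L u'')" "u = u' @ 0 # u''" by blast
    have "u' \<in> lists A" "u'' \<in> lists A" using u z(2) by auto
    hence "z = (cls A 1 m (count_list u' 1 mod m), cls A 2 n (count_list u'' 2 mod n))"
      using z h1 h2 by simp
    moreover have "(count_list u' 1 mod m, count_list u'' 2 mod n) \<in> R m n u"
      unfolding R_def using z(2) by blast
    ultimately show "z \<in> (\<lambda>(p,q). (cls A 1 m p, cls A 2 n q)) ` R m n u" by force
  next
    fix z assume "z \<in> (\<lambda>(p,q). (cls A 1 m p, cls A 2 n q)) ` R m n u"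
    then obtain pq where pq: "pq \<in> R m n u" "z = (\<lambda>(p,q). (cls A 1 m p, cls A 2 n q)) pq" by blast
    then obtain u' u'' where "pq = (count_list u' 1 mod m, count_list u'' 2 mod n)"
       "u = u' @ 0 # u''" unfolding R_def by blast
    hence z: "z = (cls A 1 m (count_list u' 1 mod m), cls A 2 n (count_list u'' 2 mod n))"
       "u = u' @ 0 # u''" using pq by auto
    have "u' \<in> lists A" "u'' \<in> lists A" using u z(2) by auto
    hence "z = (synt_hom A K u', synt_hom A L u'')" using z h1 h2 by simp
    thus "z \<in> {(synt_hom A K u', synt_hom A L u'') | u' u''. u = u' @ 0 # u''}" using z(2) by blast
  qed
qed

theorem proposition3:
  fixes m n :: nat
  assumes "m > 0" and "n > 0"
  shows "\<exists>(A :: nat set) a K L.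
           finite A \<and> a \<in> A \<and> K \<subseteq> lists A \<and> L \<subseteq> lists A \<and>
           card (synt_monoid A K) = m \<and> card (synt_monoid A L) = n \<and>
           mu (synt_hom A K) (synt_hom A L) a ` lists A
             = schutz_carrier (synt_monoid A K) (synt_monoid A L)"
proof -
  define A :: "nat set" where "A = {0,1,2}"
  define K where "K = {w\<in>lists A. count_list w 1 mod m = 0}"
  define L where "L = {w\<in>lists A. count_list w 2 mod n = 0}"
  have b1: "(1::nat) \<in> A" and b2: "(2::nat) \<in> A" by (auto simp: A_def)
  note MonK = synt_monoid_cnt[OF b1 assms(1) K_def]
  note MonL = synt_monoid_cnt[OF b2 assms(2) L_def]
  have hK: "synt_hom A K v = cls A 1 m (count_list v 1 mod m)" if "v \<in> lists A" for v
    using synt_hom_cnt[OF b1 assms(1) K_def that] .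
  have hL: "synt_hom A L v = cls A 2 n (count_list v 2 mod n)" if "v \<in> lists A" for v
    using synt_hom_cnt[OF b2 assms(2) L_def that] .
  have midu: "\<And>u. u \<in> lists A \<Longrightarrow> {(synt_hom A K u', synt_hom A L u'') | u' u''. u = u' @ 0 # u''}
     = (\<lambda>(p,q). (cls A 1 m p, cls A 2 n q)) ` R m n u"
    by (rule mid[OF A_def assms K_def L_def])
  have "mu (synt_hom A K) (synt_hom A L) 0 ` lists A = schutz_carrier (synt_monoid A K) (synt_monoid A L)"
  proof
    show "mu (synt_hom A K) (synt_hom A L) 0 ` lists A \<subseteq> schutz_carrier (synt_monoid A K) (synt_monoid A L)"
    proof
      fix z assume "z \<in> mu (synt_hom A K) (synt_hom A L) 0 ` lists A"
      then obtain u where u: "u \<in> lists A" "z = mu (synt_hom A K) (synt_hom A L) 0 u" by blast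
      have s1: "{(synt_hom A K u', synt_hom A L u'') | u' u''. u = u' @ 0 # u''} \<subseteq> synt_monoid A K \<times> synt_monoid A L"
      proof
        fix e assume "e \<in> {(synt_hom A K u', synt_hom A L u'') | u' u''. u = u' @ 0 # u''}"
        then obtain u' u'' where e: "e = (synt_hom A K u', synt_hom A L u'')" "u = u' @ 0 # u''" by blast
        have "u' \<in> lists A" "u'' \<in> lists A" using u(1) e(2) by auto
        thus "e \<in> synt_monoid A K \<times> synt_monoid A L" unfolding synt_monoid_def e(1) by blast
      qed
      have s2: "synt_hom A K u \<in> synt_monoid A K" "synt_hom A L u \<in> synt_monoid A L"
        unfolding synt_monoid_def using u(1) by blast+
      show "z \<in> schutz_carrier (synt_monoid A K) (synt_monoid A L)"
        unfolding u(2) mu_def schutz_carrier_def using s1 s2 by blast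
    qed
    show "schutz_carrier (synt_monoid A K) (synt_monoid A L) \<subseteq> mu (synt_hom A K) (synt_hom A L) 0 ` lists A"
    proof
      fix z assume "z \<in> schutz_carrier (synt_monoid A K) (synt_monoid A L)"
      then obtain X S Y where z: "z = (X, S, Y)" "X \<in> synt_monoid A K" "Y \<in> synt_monoid A L"
        "S \<subseteq> synt_monoid A K \<times> synt_monoid A L" unfolding schutz_carrier_def by auto
      have "X \<in> cls A 1 m ` {..<m}" using z(2) MonK(1) by simp
      then obtain x where x0: "x \<in> {..<m}" "X = cls A 1 m x" by (rule imageE)
      hence x: "x < m" "X = cls A 1 m x" by auto
      have "Y \<in> cls A 2 n ` {..<n}" using z(3) MonL(1) by simp
      then obtain y where y0: "y \<in> {..<n}" "Y = cls A 2 n y" by (rule imageE)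
      hence y: "y < n" "Y = cls A 2 n y" by auto
      define T where "T = {(p,q). p < m \<and> q < n \<and> (cls A 1 m p, cls A 2 n q) \<in> S}"
      have Tf: "finite T" by (rule finite_subset[of _ "{..<m} \<times> {..<n}"]) (auto simp: T_def)
      have ST: "S = (\<lambda>(p,q). (cls A 1 m p, cls A 2 n q)) ` T"
      proof
        show "S \<subseteq> (\<lambda>(p,q). (cls A 1 m p, cls A 2 n q)) ` T"
        proof
          fix s assume "s \<in> S"
          hence "fst s \<in> cls A 1 m ` {..<m}" "snd s \<in> cls A 2 n ` {..<n}"
            using z(4) MonK(1) MonL(1) by auto
          then obtain p q where pq: "p \<in> {..<m}" "fst s = cls A 1 m p" "q \<in> {..<n}" "snd s = cls A 2 n q"
            by (auto elim!: imageE)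
          hence "s = (cls A 1 m p, cls A 2 n q)" by (simp add: prod_eq_iff)
          moreover have "(p, q) \<in> T" unfolding T_def using pq \<open>s \<in> S\<close> calculation by auto
          ultimately show "s \<in> (\<lambda>(p,q). (cls A 1 m p, cls A 2 n q)) ` T" by force
        qed
        show "(\<lambda>(p,q). (cls A 1 m p, cls A 2 n q)) ` T \<subseteq> S" by (auto simp: T_def)
      qed
      have Tsub: "T \<subseteq> {..<m} \<times> {..<n}" by (auto simp: T_def)
      obtain w where w: "w \<in> lists {0,1,2}" "count_list w 1 mod m = x mod m"
        "count_list w 2 mod n = y mod n" "R m n w = T"
        using main[OF Tf assms Tsub, of x y] by blast
      have wA: "w \<in> lists A" using w(1) by (simp add: A_def)
      have wx: "count_list w 1 mod m = x" using w(2) x(1) by simp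
      have wy: "count_list w 2 mod n = y" using w(3) y(1) by simp
      have "mu (synt_hom A K) (synt_hom A L) 0 w
          = (synt_hom A K w, {(synt_hom A K u', synt_hom A L u'') | u' u''. w = u' @ 0 # u''}, synt_hom A L w)"
        unfolding mu_def by (rule refl)
      also have "\<dots> = (X, S, Y)"
        unfolding midu[OF wA] hK[OF wA] hL[OF wA] wx wy w(4) ST x(2) y(2) by (rule refl)
      finally have "mu (synt_hom A K) (synt_hom A L) 0 w = z" using z(1) by simp
      thus "z \<in> mu (synt_hom A K) (synt_hom A L) 0 ` lists A" using wA by blast
    qed
  qed
  moreover have "finite A" "(0::nat) \<in> A" by (auto simp: A_def)
  moreover have "K \<subseteq> lists A" "L \<subseteq> lists A" by (auto simp: K_def L_def)
  ultimately show ?thesis using MonK(2) MonL(2) by blast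
qed


end
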